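(* Let $P=\{x\in\mathbb{R}^n: Ax\ge b\}$ be full-dimensional and pointed, $\mathcal{I}\subseteq\{1,\dots,n\}$, $P_I=\{x\in P:x_j\in\mathbb{Z}\ \forall j\in\mathcal{I}\}$, and $c\in\mathbb{R}^n$. Let $\mathcal{T}$ be finite and $P^t=\{x\in P:D^tx\ge D^t_0\}$, $t\in\mathcal{T}$, the terms of a disjunction with $P_I\subseteq\operatorname{cl}\operatorname{conv}(\bigcup_tP^t)$. For each $t\in\mathcal{T}$, let $\mathcal{P}^t$ consist of an optimal (vertex) solution $p^t$ to $\min\{c^\top x:x\in P^t\}$ together with one point on each of the edges of $P^t$ emanating from $p^t$. Let $\mathcal{P}=\bigcup_t\mathcal{P}^t$ and $\mathcal{R}=\emptyset$. Then any $(\alpha,\beta)$ satisfying $\alpha^\top p\ge\beta$ for all $p\in\mathcal{P}$ and additionally $\alpha^\top p^t=\beta$ for all $t\in\mathcal{T}$ yields an inequality $\alpha^\top x\ge\beta$ that is valid for $P_I$. *)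

theory Defs
  imports "HOL-Analysis.Analysis"
begin

definition polyhedron_of :: "real^'n^'m \<Rightarrow> real^'m \<Rightarrow> (real^'n) set" where
  "polyhedron_of A b = {x. \<forall>i. (A *v x) $ i \<ge> b $ i}"

definition pointed :: "(real^'n) set \<Rightarrow> bool" where
  "pointed S \<longleftrightarrow> \<not> (\<exists>x d. d \<noteq> 0 \<and> (\<forall>l::real. x + l *\<^sub>R d \<in> S))"

definition mixed_int_points :: "(real^'n) set \<Rightarrow> 'n set \<Rightarrow> (real^'n) set" where
  "mixed_int_points P I = {x \<in> P. \<forall>j\<in>I. x $ j \<in> \<int>}"

text \<open>A disjunctive term {x in P. D x \<ge> D0}, the rows of (D, D0) given as a finite set of pairs.\<close>
definition term_poly :: "(real^'n) set \<Rightarrow> ((real^'n) \<times> real) set \<Rightarrow> (real^'n) set" where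
  "term_poly P D = {x \<in> P. \<forall>(d, d0) \<in> D. d \<bullet> x \<ge> d0}"

definition edges_at :: "(real^'n) set \<Rightarrow> real^'n \<Rightarrow> (real^'n) set set" where
  "edges_at S p = {e. e face_of S \<and> aff_dim e = 1 \<and> p \<in> e}"

end

theory Submission
  imports Defs
begin

definition hpoly :: "('a::euclidean_space \<times> real) set \<Rightarrow> 'a set" where
  "hpoly H = {x. \<forall>(a,b)\<in>H. a \<bullet> x \<ge> b}"

lemma convex_hpoly: "convex (hpoly H)"
proof -
  have "hpoly H = (\<Inter>h\<in>H. {x. fst h \<bullet> x \<ge> snd h})" by (force simp: hpoly_def)
  then show ?thesis by (simp add: convex_INT convex_halfspace_ge)
qed

lemma cone_lemma:
  fixes p \<alpha> :: "'a::euclidean_space"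
  assumes "finite H" "\<forall>(a,b)\<in>H. a \<bullet> p = b" "p extreme_point_of hpoly H"
    "\<forall>E. E face_of hpoly H \<and> aff_dim E = 1 \<and> p \<in> E \<longrightarrow> (\<exists>z\<in>E. z \<noteq> p \<and> \<alpha> \<bullet> z \<ge> \<beta>)"
    "\<alpha> \<bullet> p = \<beta>"
  shows "\<forall>y\<in>hpoly H. \<alpha> \<bullet> y \<ge> \<beta>"
  using assms
proof (induction "nat (aff_dim (hpoly H))" arbitrary: H rule: less_induct)
  case less
  let ?K = "hpoly H"
  have cK: "convex ?K" by (rule convex_hpoly)
  have pK: "p \<in> ?K" using less.prems(3) by (simp add: extreme_point_of_def)
  show ?case
  proof (rule ccontr)
    assume "\<not> ?thesis"
    then obtain y where yK: "y \<in> ?K" and ylt: "\<alpha> \<bullet> y < \<beta>" by force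
    have yp: "y \<noteq> p" using ylt less.prems(5) by auto
    show False
    proof (cases "?K \<subseteq> affine hull {p, y}")
      case True
      have "aff_dim ?K \<le> aff_dim (affine hull {p,y})" by (rule aff_dim_subset[OF True])
      also have "\<dots> = 1" using yp by (simp add: aff_dim_affine_hull)
      finally have le1: "aff_dim ?K \<le> 1" .
      have "aff_dim {p,y} \<le> aff_dim ?K" using pK yK by (intro aff_dim_subset) auto
      with yp le1 have "aff_dim ?K = 1" by simp
      then obtain z where zK: "z \<in> ?K" and zp: "z \<noteq> p" and az: "\<alpha> \<bullet> z \<ge> \<beta>"
        using less.prems(4) pK face_of_refl[OF cK] by blast
      from zK True obtain u v where uv: "u + v = 1" "z = u *\<^sub>R p + v *\<^sub>R y"
        by (auto simp: affine_hull_2)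
      have uu: "u = 1 - v" using uv by simp
      have zeq: "z = p + v *\<^sub>R (y - p)" using uv(2) unfolding uu
        by (simp add: algebra_simps)
      have "v \<noteq> 0" using zp zeq by auto
      show False
      proof (cases "v > 0")
        case True
        have "\<alpha> \<bullet> z = \<alpha> \<bullet> p + v * (\<alpha> \<bullet> y - \<alpha> \<bullet> p)" using zeq by (simp add: inner_simps)
        also have "\<dots> < \<beta>" using True ylt less.prems(5) by (simp add: mult_pos_neg)
        finally show False using az by simp
      next
        case False
        with \<open>v \<noteq> 0\<close> have vn: "v < 0" by simp
        have e: "(1-v) *\<^sub>R p = z - v *\<^sub>R y" using zeq by (simp add: algebra_simps)
        define w where "w = -v/(1-v)"
        have w: "0 < w" "w < 1" using vn by (auto simp: w_def field_simps)
        have "(1 - w) *\<^sub>R z + w *\<^sub>R y = (1/(1-v)) *\<^sub>R (z - v *\<^sub>R y)"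
          using vn by (simp add: w_def field_simps scaleR_right_diff_distrib)
        also have "\<dots> = (1/(1-v)) *\<^sub>R ((1-v) *\<^sub>R p)" using e by simp
        also have "\<dots> = p" using vn by simp
        finally have peq: "(1 - w) *\<^sub>R z + w *\<^sub>R y = p" .
        have "z \<noteq> y"
        proof
          assume "z = y"
          have "(1 - v) *\<^sub>R (y - p) = y - z" using zeq by (simp add: algebra_simps)
          with \<open>z = y\<close> have "(1 - v) *\<^sub>R (y - p) = 0" by simp
          then show False using vn yp by auto
        qed
        then have "p \<in> open_segment z y"
          using w peq unfolding in_segment by blast
        with less.prems(3) zK yK show False by (auto simp: extreme_point_of_def)
      qed
    next
      case False
      then obtain w where wK: "w \<in> ?K" and wn: "w \<notin> affine hull {p,y}" by blast
      define c1 where "c1 = \<alpha> \<bullet> (w - p)"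
      define c2 where "c2 = \<alpha> \<bullet> (y - p)"
      have c2: "c2 < 0" using ylt less.prems(5) by (simp add: c2_def inner_diff_right)
      define d where "d = c1 *\<^sub>R (y - p) - c2 *\<^sub>R (w - p)"
      have ad: "\<alpha> \<bullet> d = 0"
        by (simp add: d_def c1_def c2_def inner_diff_right algebra_simps)
      have dnz: "d \<noteq> 0"
      proof
        assume "d = 0"
        then have "c2 *\<^sub>R (w - p) = c1 *\<^sub>R (y - p)" by (simp add: d_def)
        then have "(1/c2) *\<^sub>R (c2 *\<^sub>R (w - p)) = (1/c2) *\<^sub>R (c1 *\<^sub>R (y - p))" by simp
        then have "w - p = (c1/c2) *\<^sub>R (y - p)" using c2 by simp
        then have "w = (1 - c1/c2) *\<^sub>R p + (c1/c2) *\<^sub>R y" by (simp add: algebra_simps)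
        then have "w \<in> affine hull {p,y}" unfolding affine_hull_2 by force
        with wn show False by simp
      qed
      have constd: "\<And>a. a \<bullet> y = a \<bullet> p \<Longrightarrow> a \<bullet> w = a \<bullet> p \<Longrightarrow> a \<bullet> d = 0"
        by (simp add: d_def inner_diff_right)
      have exd: "\<exists>(a,b)\<in>H. a \<bullet> d \<noteq> 0"
      proof (rule ccontr)
        assume "\<not> (\<exists>(a,b)\<in>H. a \<bullet> d \<noteq> 0)"
        then have all0: "\<forall>(a,b)\<in>H. a \<bullet> d = 0" by auto
        have ad0: "a \<bullet> d = 0 \<and> a \<bullet> p = b" if "(a,b) \<in> H" for a b
          using all0 less.prems(2) that by auto
        have "p + d \<in> ?K" "p - d \<in> ?K" using ad0
          by (auto simp: hpoly_def inner_add_right inner_diff_right)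
        moreover have "p \<in> open_segment (p + d) (p - d)"
        proof -
          have "(1 - (1/2::real)) *\<^sub>R (p + d) + (1/2::real) *\<^sub>R (p - d) = p"
            by (simp add: algebra_simps scaleR_add_left[symmetric])
          moreover have "p + d \<noteq> p - d" 
          proof
            assume "p + d = p - d"
            then have "d + d = 0" by (simp add: algebra_simps)
            then have "(2::real) *\<^sub>R d = 0" by (simp only: scaleR_2)
            then show False using dnz by simp
          qed
          ultimately show ?thesis unfolding in_segment
            by (metis (no_types, lifting) field_sum_of_halves half_gt_zero_iff less_add_same_cancel1 zero_less_one)
        qed
        ultimately show False using less.prems(3) by (auto simp: extreme_point_of_def)
      qed
      obtain e where ae: "\<exists>(a,b)\<in>H. a \<bullet> e < 0" and \<alpha>e: "\<alpha> \<bullet> e = 0"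
        and conste: "\<And>a. a \<bullet> y = a \<bullet> p \<Longrightarrow> a \<bullet> w = a \<bullet> p \<Longrightarrow> a \<bullet> e = 0"
      proof (cases "\<exists>(a,b)\<in>H. a \<bullet> d < 0")
        case True
        then show ?thesis using that[of d] ad constd by blast
      next
        case False
        then have "\<exists>(a,b)\<in>H. a \<bullet> (-d) < 0" using exd by force
        then show ?thesis using that[of "-d"] ad constd by auto
      qed
      define G where "G = {h \<in> H. fst h \<bullet> e < 0}"
      define R where "R = (\<lambda>h. (fst h \<bullet> y - snd h) / (-(fst h \<bullet> e))) ` G"
      have finR: "finite R" using less.prems(1) by (simp add: R_def G_def)
      have neR: "R \<noteq> {}" using ae by (force simp: R_def G_def)
      define s where "s = Min R"
      obtain a0 b0 where ab0: "(a0,b0) \<in> H" "a0 \<bullet> e < 0" "s = (a0 \<bullet> y - b0) / (-(a0 \<bullet> e))"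
        using Min_in[OF finR neR] unfolding s_def R_def G_def by auto
      have sle: "s \<le> (a \<bullet> y - b) / (-(a \<bullet> e))" if "(a,b) \<in> H" "a \<bullet> e < 0" for a b
        unfolding s_def using that by (intro Min_le[OF finR]) (force simp: R_def G_def)
      have yH: "\<forall>(a,b)\<in>H. a \<bullet> y \<ge> b" using yK by (simp add: hpoly_def)
      have "a0 \<bullet> y \<ge> b0" using ab0(1) yH by auto
      then have s0: "s \<ge> 0" using ab0 by (auto intro!: divide_nonneg_neg)
      define z where "z = y + s *\<^sub>R e"
      have zK: "z \<in> ?K" unfolding hpoly_def
      proof (clarify)
        fix a b assume ab: "(a,b) \<in> H"
        have "a \<bullet> z = a \<bullet> y + s * (a \<bullet> e)" by (simp add: z_def inner_add_right)
        show "b \<le> a \<bullet> z"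
        proof (cases "a \<bullet> e < 0")
          case True
          have pos: "0 < -(a \<bullet> e)" using True by simp
          have "s * (-(a \<bullet> e)) \<le> a \<bullet> y - b" using sle[OF ab True] unfolding pos_le_divide_eq[OF pos] .
          then show ?thesis using \<open>a \<bullet> z = _\<close> by simp
        next
          case False
          then have "s * (a \<bullet> e) \<ge> 0" using s0 by simp
          then show ?thesis using \<open>a \<bullet> z = _\<close> yH ab by auto
        qed
      qed
      have z0: "a0 \<bullet> z = b0" using ab0 by (simp add: z_def inner_add_right inner_diff_right field_simps)
      have \<alpha>z: "\<alpha> \<bullet> z < \<beta>" using ylt \<alpha>e by (simp add: z_def inner_add_right)
      let ?H' = "insert (-a0, -b0) H"
      have Feq: "hpoly ?H' = ?K \<inter> {x. a0 \<bullet> x = b0}"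
        using ab0(1) by (auto simp: hpoly_def)
      have Fface: "hpoly ?H' face_of ?K" unfolding Feq
        by (rule face_of_Int_supporting_hyperplane_ge[OF cK]) (use ab0(1) in \<open>auto simp: hpoly_def\<close>)
      have a0p: "a0 \<bullet> p = b0" using less.prems(2) ab0(1) by auto
      have pF: "p \<in> hpoly ?H'" using Feq pK a0p by auto
      have Fne: "hpoly ?H' \<noteq> ?K"
      proof
        assume eq: "hpoly ?H' = ?K"
        have "a0 \<bullet> y = b0" "a0 \<bullet> w = b0" using eq yK wK Feq by auto
        then have "a0 \<bullet> e = 0" using conste a0p by simp
        with ab0 show False by simp
      qed
      have "aff_dim (hpoly ?H') < aff_dim ?K" by (rule face_of_aff_dim_lt[OF cK Fface Fne])
      moreover have "aff_dim (hpoly ?H') \<ge> 0" using pF by (metis aff_dim_negative_iff empty_iff not_le)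
      ultimately have lt: "nat (aff_dim (hpoly ?H')) < nat (aff_dim ?K)" by simp
      have "\<forall>y\<in>hpoly ?H'. \<alpha> \<bullet> y \<ge> \<beta>"
      proof (rule less.hyps[OF lt])
        show "finite ?H'" using less.prems(1) by simp
        show "\<forall>(a,b)\<in>?H'. a \<bullet> p = b" using less.prems(2) a0p by auto
        show "p extreme_point_of hpoly ?H'" using extreme_point_of_face[OF Fface] less.prems(3) pF by simp
        show "\<forall>E. E face_of hpoly ?H' \<and> aff_dim E = 1 \<and> p \<in> E \<longrightarrow> (\<exists>z\<in>E. z \<noteq> p \<and> \<alpha> \<bullet> z \<ge> \<beta>)"
          using less.prems(4) face_of_trans[OF _ Fface] by blast
        show "\<alpha> \<bullet> p = \<beta>" by (rule less.prems(5))
      qed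
      moreover have "z \<in> hpoly ?H'" using Feq zK z0 by auto
      ultimately show False using \<alpha>z by force
    qed
  qed
qed
lemma vec_id1: fixes p a b :: "'a::real_vector"
  shows "(1 - u) *\<^sub>R (p + s *\<^sub>R (a - p)) + u *\<^sub>R (p + s *\<^sub>R (b - p)) = p + s *\<^sub>R (((1 - u) *\<^sub>R a + u *\<^sub>R b) - p)"
  by (simp add: algebra_simps)
lemma vec_id2: fixes p a b :: "'a::real_vector"
  shows "s \<noteq> 0 \<Longrightarrow> a \<noteq> b \<Longrightarrow> p + s *\<^sub>R (a - p) \<noteq> p + s *\<^sub>R (b - p)" by simp

lemma term_lemma:
  fixes p \<alpha> :: "'a::euclidean_space"
  assumes finH: "finite H" and pext: "p extreme_point_of hpoly H"
    and edges: "\<forall>E. E face_of hpoly H \<and> aff_dim E = 1 \<and> p \<in> E \<longrightarrow> (\<exists>z\<in>E. z \<noteq> p \<and> \<alpha> \<bullet> z \<ge> \<beta>)"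
    and ap: "\<alpha> \<bullet> p = \<beta>"
  shows "\<forall>y\<in>hpoly H. \<alpha> \<bullet> y \<ge> \<beta>"
proof -
  let ?S = "hpoly H"
  define J where "J = {h \<in> H. fst h \<bullet> p = snd h}"
  let ?K = "hpoly J"
  have finJ: "finite J" using finH by (simp add: J_def)
  have pS: "p \<in> ?S" using pext by (simp add: extreme_point_of_def)
  have pH: "a \<bullet> p \<ge> b" if "(a,b) \<in> H" for a b using pS that by (auto simp: hpoly_def)
  have SK: "?S \<subseteq> ?K" by (auto simp: hpoly_def J_def)
  have pK: "p \<in> ?K" using pS SK by auto
  have cS: "convex ?S" by (rule convex_hpoly)
  have loc: "\<exists>c>0. \<forall>s. 0 < s \<and> s < c \<longrightarrow> p + s *\<^sub>R (y - p) \<in> ?S" if yK: "y \<in> ?K" for y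
  proof -
    have "\<forall>h\<in>H. eventually (\<lambda>s. fst h \<bullet> (p + s *\<^sub>R (y - p)) \<ge> snd h) (at_right (0::real))"
    proof
      fix h assume hH: "h \<in> H"
      obtain a b where h: "h = (a,b)" by fastforce
      show "eventually (\<lambda>s. fst h \<bullet> (p + s *\<^sub>R (y - p)) \<ge> snd h) (at_right (0::real))"
      proof (cases "a \<bullet> p = b")
        case True
        then have "h \<in> J" using hH h by (simp add: J_def)
        then have "a \<bullet> y \<ge> b" using yK h by (auto simp: hpoly_def)
        have "fst h \<bullet> (p + s *\<^sub>R (y - p)) \<ge> snd h" if "s > 0" for s :: real
        proof -
          have "a \<bullet> (p + s *\<^sub>R (y - p)) = b + s * (a \<bullet> y - b)"
            using True by (simp add: inner_add_right inner_diff_right algebra_simps)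
          moreover have "s * (a \<bullet> y - b) \<ge> 0" using that \<open>a \<bullet> y \<ge> b\<close> by simp
          ultimately show ?thesis using h by simp
        qed
        then show ?thesis using eventually_at_right_less[of "0::real"]
          by (auto elim: eventually_mono)
      next
        case False
        then have lt: "b < a \<bullet> p" using pH hH h by force
        have "((\<lambda>s::real. a \<bullet> (p + s *\<^sub>R (y - p))) \<longlongrightarrow> a \<bullet> (p + 0 *\<^sub>R (y - p))) (at_right 0)"
          by (intro tendsto_intros)
        then have "((\<lambda>s::real. a \<bullet> (p + s *\<^sub>R (y - p))) \<longlongrightarrow> a \<bullet> p) (at_right 0)" by simp
        from order_tendstoD(1)[OF this lt]
        show ?thesis using h by (auto elim: eventually_mono)
      qed
    qed
    then have "eventually (\<lambda>s. \<forall>h\<in>H. fst h \<bullet> (p + s *\<^sub>R (y - p)) \<ge> snd h) (at_right (0::real))"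
      by (rule eventually_ball_finite[OF finH])
    then show ?thesis unfolding eventually_at_right_field by (force simp: hpoly_def)
  qed
  have pextK: "p extreme_point_of ?K"
    unfolding extreme_point_of_def
  proof (intro conjI pK ballI notI)
    fix y1 y2 assume y1: "y1 \<in> ?K" and y2: "y2 \<in> ?K" and pin: "p \<in> open_segment y1 y2"
    obtain c1 where c1: "c1 > 0" "\<forall>s. 0 < s \<and> s < c1 \<longrightarrow> p + s *\<^sub>R (y1 - p) \<in> ?S" using loc[OF y1] by blast
    obtain c2 where c2: "c2 > 0" "\<forall>s. 0 < s \<and> s < c2 \<longrightarrow> p + s *\<^sub>R (y2 - p) \<in> ?S" using loc[OF y2] by blast
    define s where "s = min c1 c2 / 2"
    have s: "0 < s" "s < c1" "s < c2" using c1 c2 by (auto simp: s_def)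
    have m1: "p + s *\<^sub>R (y1 - p) \<in> ?S" using c1 s by blast
    have m2: "p + s *\<^sub>R (y2 - p) \<in> ?S" using c2 s by blast
    from pin[unfolded in_segment(2)] obtain u where u: "0 < u" "u < 1" "p = (1 - u) *\<^sub>R y1 + u *\<^sub>R y2" "y1 \<noteq> y2"
      by blast
    have "(1 - u) *\<^sub>R (p + s *\<^sub>R (y1 - p)) + u *\<^sub>R (p + s *\<^sub>R (y2 - p))
          = p + s *\<^sub>R (((1 - u) *\<^sub>R y1 + u *\<^sub>R y2) - p)"
      by (rule vec_id1)
    also have "\<dots> = p" using u(3) by simp
    finally have eq: "(1 - u) *\<^sub>R (p + s *\<^sub>R (y1 - p)) + u *\<^sub>R (p + s *\<^sub>R (y2 - p)) = p" .
    have ne: "p + s *\<^sub>R (y1 - p) \<noteq> p + s *\<^sub>R (y2 - p)" using s u(4) by (intro vec_id2) auto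
    have "p \<in> open_segment (p + s *\<^sub>R (y1 - p)) (p + s *\<^sub>R (y2 - p))"
      unfolding in_segment(2) using eq ne u(1,2) by metis
    with m1 m2 pext show False unfolding extreme_point_of_def by blast
  qed
  have edgesK: "\<forall>E. E face_of ?K \<and> aff_dim E = 1 \<and> p \<in> E \<longrightarrow> (\<exists>z\<in>E. z \<noteq> p \<and> \<alpha> \<bullet> z \<ge> \<beta>)"
  proof (intro allI impI, elim conjE)
    fix E assume EK: "E face_of ?K" and E1: "aff_dim E = 1" and pE: "p \<in> E"
    have "\<exists>z0\<in>E. z0 \<noteq> p"
    proof (rule ccontr)
      assume "\<not> ?thesis"
      then have "E = {p}" using pE by blast
      with E1 show False by simp
    qed
    then obtain z0 where z0E: "z0 \<in> E" and z0p: "z0 \<noteq> p" by blast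
    have z0K: "z0 \<in> ?K" using z0E face_of_imp_subset[OF EK] by auto
    obtain c where c: "c > 0" "\<forall>s. 0 < s \<and> s < c \<longrightarrow> p + s *\<^sub>R (z0 - p) \<in> ?S" using loc[OF z0K] by blast
    define s where "s = min c 1 / 2"
    have s: "0 < s" "s < c" "s < 1" using c by (auto simp: s_def)
    define z1 where "z1 = p + s *\<^sub>R (z0 - p)"
    have z1S: "z1 \<in> ?S" using c(2) s(1,2) unfolding z1_def by blast
    have "z1 = (1 - s) *\<^sub>R p + s *\<^sub>R z0" by (simp add: z1_def algebra_simps)
    moreover have "0 \<le> s" "s \<le> 1" using s by auto
    ultimately have "z1 \<in> closed_segment p z0" unfolding in_segment(1) by blast
    then have z1E: "z1 \<in> E"
      using closed_segment_subset[OF pE z0E face_of_imp_convex[OF EK]] by auto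
    have z1p: "z1 \<noteq> p"
    proof
      assume "z1 = p"
      then have "s *\<^sub>R (z0 - p) = 0" by (simp add: z1_def)
      then show False using s z0p by simp
    qed
    define E' where "E' = E \<inter> ?S"
    have E'face: "E' face_of ?S"
      unfolding face_of_def E'_def
    proof (intro conjI ballI impI)
      show "E \<inter> ?S \<subseteq> ?S" by auto
      show "convex (E \<inter> ?S)" using face_of_imp_convex[OF EK] cS by (rule convex_Int)
      fix a b x assume ab: "a \<in> ?S" "b \<in> ?S" "x \<in> E \<inter> ?S" "x \<in> open_segment a b"
      have "a \<in> ?K" "b \<in> ?K" "x \<in> E" using ab SK by auto
      then have "a \<in> E \<and> b \<in> E" using face_ofD[OF EK ab(4)] by blast
      then show "a \<in> E \<inter> ?S" "b \<in> E \<inter> ?S" using ab by auto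
    qed
    have "aff_dim E' \<le> 1" using E1 aff_dim_subset[of E' E] by (auto simp: E'_def)
    moreover have "aff_dim {p, z1} \<le> aff_dim E'" using pE pS z1E z1S by (intro aff_dim_subset) (auto simp: E'_def)
    ultimately have "aff_dim E' = 1" using z1p by simp
    moreover have "p \<in> E'" using pE pS by (simp add: E'_def)
    ultimately obtain z where "z \<in> E'" "z \<noteq> p" "\<alpha> \<bullet> z \<ge> \<beta>" using edges E'face by blast
    then show "\<exists>z\<in>E. z \<noteq> p \<and> \<alpha> \<bullet> z \<ge> \<beta>" by (auto simp: E'_def)
  qed
  have "\<forall>y\<in>?K. \<alpha> \<bullet> y \<ge> \<beta>"
    by (rule cone_lemma[OF finJ _ pextK edgesK ap]) (auto simp: J_def)
  then show ?thesis using SK by auto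
qed


lemma term_rep:
  "term_poly (polyhedron_of A b) Dt = hpoly (range (\<lambda>i. (A $ i, b $ i)) \<union> Dt)"
  by (auto simp: term_poly_def polyhedron_of_def hpoly_def matrix_vector_mul_component)

theorem theorem4:
  fixes A :: "real^'n^'m" and b :: "real^'m" and I :: "'n set" and c :: "real^'n"
    and T :: "'t set" and D :: "'t \<Rightarrow> ((real^'n) \<times> real) set"
    and p :: "'t \<Rightarrow> real^'n" and q :: "'t \<Rightarrow> (real^'n) set \<Rightarrow> real^'n"
    and \<alpha> :: "real^'n" and \<beta> :: real
  assumes full_dim: "aff_dim (polyhedron_of A b) = int CARD('n)"
    and pointed: "pointed (polyhedron_of A b)"
    and fin_T: "finite T"
    and fin_D: "\<forall>t\<in>T. finite (D t)"
    and disj: "mixed_int_points (polyhedron_of A b) I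
               \<subseteq> closure (convex hull (\<Union>t\<in>T. term_poly (polyhedron_of A b) (D t)))"
    and opt: "\<forall>t\<in>T. term_poly (polyhedron_of A b) (D t) \<noteq> {} \<longrightarrow>
               p t extreme_point_of (term_poly (polyhedron_of A b) (D t)) \<and>
               (\<forall>x\<in>term_poly (polyhedron_of A b) (D t). c \<bullet> p t \<le> c \<bullet> x)"
    and edge_pts: "\<forall>t\<in>T. term_poly (polyhedron_of A b) (D t) \<noteq> {} \<longrightarrow>
               (\<forall>e\<in>edges_at (term_poly (polyhedron_of A b) (D t)) (p t). q t e \<in> e \<and> q t e \<noteq> p t)"
    and valid_pts: "\<forall>t\<in>T. term_poly (polyhedron_of A b) (D t) \<noteq> {} \<longrightarrow>
               (\<forall>x \<in> insert (p t) (q t ` edges_at (term_poly (polyhedron_of A b) (D t)) (p t)).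
                  \<alpha> \<bullet> x \<ge> \<beta>)"
    and tight: "\<forall>t\<in>T. term_poly (polyhedron_of A b) (D t) \<noteq> {} \<longrightarrow> \<alpha> \<bullet> p t = \<beta>"
  shows "\<forall>x \<in> mixed_int_points (polyhedron_of A b) I. \<alpha> \<bullet> x \<ge> \<beta>"
proof -
  let ?P = "polyhedron_of A b"
  have half: "term_poly ?P (D t) \<subseteq> {x. \<alpha> \<bullet> x \<ge> \<beta>}" if tT: "t \<in> T" for t
  proof (cases "term_poly ?P (D t) = {}")
    case True
    then show ?thesis by simp
  next
    case False
    let ?H = "range (\<lambda>i. (A $ i, b $ i)) \<union> D t"
    have Seq: "term_poly ?P (D t) = hpoly ?H" by (rule term_rep)
    have "finite (range (\<lambda>i. (A $ i, b $ i)))" by (rule finite_imageI) simp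
    then have finH: "finite ?H" using fin_D tT by blast
    have "p t extreme_point_of term_poly ?P (D t)" using opt tT False by blast
    then have pext: "p t extreme_point_of hpoly ?H" unfolding Seq .
    have ap: "\<alpha> \<bullet> p t = \<beta>" using tight tT False by blast
    have edges: "\<forall>E. E face_of hpoly ?H \<and> aff_dim E = 1 \<and> p t \<in> E \<longrightarrow> (\<exists>z\<in>E. z \<noteq> p t \<and> \<alpha> \<bullet> z \<ge> \<beta>)"
    proof (intro allI impI)
      fix E assume E: "E face_of hpoly ?H \<and> aff_dim E = 1 \<and> p t \<in> E"
      then have Ee: "E \<in> edges_at (term_poly ?P (D t)) (p t)" unfolding edges_at_def Seq by simp
      have ep: "\<forall>e\<in>edges_at (term_poly ?P (D t)) (p t). q t e \<in> e \<and> q t e \<noteq> p t"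
        using edge_pts tT False by blast
      have vp: "\<forall>x\<in>insert (p t) (q t ` edges_at (term_poly ?P (D t)) (p t)). \<alpha> \<bullet> x \<ge> \<beta>"
        using valid_pts tT False by blast
      have "q t E \<in> E" "q t E \<noteq> p t" using ep Ee by blast+
      moreover have "\<alpha> \<bullet> q t E \<ge> \<beta>" using vp Ee by blast
      ultimately show "\<exists>z\<in>E. z \<noteq> p t \<and> \<alpha> \<bullet> z \<ge> \<beta>" by blast
    qed
    have "\<forall>y\<in>hpoly ?H. \<alpha> \<bullet> y \<ge> \<beta>" by (rule term_lemma[OF finH pext edges ap])
    then show ?thesis unfolding Seq by blast
  qed
  have U: "(\<Union>t\<in>T. term_poly ?P (D t)) \<subseteq> {x. \<alpha> \<bullet> x \<ge> \<beta>}" using half by blast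
  have "convex hull (\<Union>t\<in>T. term_poly ?P (D t)) \<subseteq> {x. \<alpha> \<bullet> x \<ge> \<beta>}"
    by (rule hull_minimal[OF U]) (rule convex_halfspace_ge)
  then have "closure (convex hull (\<Union>t\<in>T. term_poly ?P (D t))) \<subseteq> {x. \<alpha> \<bullet> x \<ge> \<beta>}"
    by (rule closure_minimal[OF _ closed_halfspace_ge])
  then have "mixed_int_points ?P I \<subseteq> {x. \<alpha> \<bullet> x \<ge> \<beta>}" using disj by (rule subset_trans[rotated])
  then show ?thesis by blast
qed

end
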